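(* Let $g:\mathbb{R}^n\to\mathbb{R}^n$ be convex, order-preserving and additively homogeneous, and assume $g$ admits at least one harmonic vector. Let $C$ be the set of critical nodes of $g$ and $N=[n]\setminus C$. Let $u\in\mathbb{R}^n$ be super-harmonic for $g$ ($g(u)\le u$). Then each of the following conditions defines uniquely a vector $v\in\mathbb{R}^n$, and all four define the same vector: (i) $v=\lim_{k\to\infty} g^k(u)$ (the limit exists); (ii) $v$ is harmonic for $g$ and $v_C=u_C$; (iii) $v_C=u_C$ and $v_N$ is a fixed point of the map $h:\mathbb{R}^N\to\mathbb{R}^N$, $h(y)=\big(g(\imath_N(y,u_C))\big)_N$; (iv) $v$ is the smallest super-harmonic vector of $g$ that dominates $u$ on $C$ (i.e. with $v_C\ge u_C$).
   Context: $[n]=\{1,\dots,n\}$, $g^k$ is the $k$-th iterate of $g$. A map $g:\mathbb{R}^n\to\mathbb{R}^n$ is order-preserving if $x\le y$ (coordinatewise) implies $g(x)\le g(y)$; additively homogeneous if $g(\lambda+x)=\lambda+g(x)$ for all $\lambda\in\mathbb{R}$, $x\in\mathbb{R}^n$; convex if each coordinate $g_i$ is convex. A vector $u$ is harmonic for $g$ if $g(u)=u$ and super-harmonic if $g(u)\le u$. The subdifferential of $g$ at $u$ is $\partial g(u)=\{M\in\mathbb{R}^{n\times n}: g(x)-g(u)\ge M(x-u)\ \forall x\}$ (its elements are stochastic matrices here). For $I\subseteq[n]$, $x_I$ denotes the restriction of $x$ to $I$, $M_{IJ}$ the $I\times J$ submatrix, and $\imath_N(y,z)$ the vector of $\mathbb{R}^n$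 with $N$-coordinates $y$ and $C$-coordinates $z$. A recurrence class of $M$ is a final communication class $F$ of $M$ (strongly connected class of the graph of nonzero entries with no arc leaving it) with $M_{FF}$ stochastic. A node is critical for $g$ if it belongs to a recurrence class of some $M\in\partial g(w)$, where $w$ is a harmonic vector of $g$; this set does not depend on the choice of $w$. *)

theory Defs
  imports "HOL-Analysis.Analysis"
begin

text \<open>Vectors of R^n are modelled as real^'n (index type 'n of class finite);
  the order on real^'n is the coordinatewise order.\<close>

definition order_preserving :: "(real^'n \<Rightarrow> real^'n) \<Rightarrow> bool" where
  "order_preserving g \<longleftrightarrow> (\<forall>x y. x \<le> y \<longrightarrow> g x \<le> g y)"

definition additively_homogeneous :: "(real^'n \<Rightarrow> real^'n) \<Rightarrow> bool" where
  "additively_homogeneous g \<longleftrightarrow>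
     (\<forall>(c::real) x. g ((\<chi> i. c) + x) = (\<chi> i. c) + g x)"

definition convex_map :: "(real^'n \<Rightarrow> real^'n) \<Rightarrow> bool" where
  "convex_map g \<longleftrightarrow> (\<forall>i. convex_on UNIV (\<lambda>x. g x $ i))"

definition harmonic :: "(real^'n \<Rightarrow> real^'n) \<Rightarrow> real^'n \<Rightarrow> bool" where
  "harmonic g u \<longleftrightarrow> g u = u"

definition super_harmonic :: "(real^'n \<Rightarrow> real^'n) \<Rightarrow> real^'n \<Rightarrow> bool" where
  "super_harmonic g u \<longleftrightarrow> g u \<le> u"

definition subdifferential :: "(real^'n \<Rightarrow> real^'n) \<Rightarrow> real^'n \<Rightarrow> (real^'n^'n) set" where
  "subdifferential g u = {M. \<forall>x. M *v (x - u) \<le> g x - g u}"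

definition mat_graph :: "real^'n^'n \<Rightarrow> ('n \<times> 'n) set" where
  "mat_graph M = {(i, j). M $ i $ j \<noteq> 0}"

text \<open>A recurrence class: a final communication class F of M with M_FF stochastic.\<close>
definition recurrence_class :: "real^'n^'n \<Rightarrow> 'n set \<Rightarrow> bool" where
  "recurrence_class M F \<longleftrightarrow>
     (\<exists>i. F = {j. (i, j) \<in> (mat_graph M)\<^sup>* \<and> (j, i) \<in> (mat_graph M)\<^sup>*}) \<and>
     (\<forall>i\<in>F. \<forall>j. M $ i $ j \<noteq> 0 \<longrightarrow> j \<in> F) \<and>
     (\<forall>i\<in>F. \<forall>j\<in>F. 0 \<le> M $ i $ j) \<and>
     (\<forall>i\<in>F. (\<Sum>j\<in>F. M $ i $ j) = 1)"

definition critical_nodes :: "(real^'n \<Rightarrow> real^'n) \<Rightarrow> 'n set" where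
  "critical_nodes g = {i. \<exists>w. harmonic g w \<and>
      (\<exists>M \<in> subdifferential g w. \<exists>F. recurrence_class M F \<and> i \<in> F)}"

end

theory Submission
  imports Defs
begin
lemma subgrad_exists:
  fixes f :: "real^'n \<Rightarrow> real"
  assumes cf: "convex_on UNIV f"
  shows "\<exists>r. \<forall>x. r \<bullet> (x - p) \<le> f x - f p"
proof -
  define S where "S = epigraph UNIV f"
  define T where "T = {p} \<times> {..<f p}"
  have cS: "convex S" unfolding S_def using cf by (rule convex_epigraphI)
  have cT: "convex T" unfolding T_def
    by (intro convex_Times convex_singleton convex_real_interval)
  have ne: "S \<noteq> {}" "T \<noteq> {}" unfolding S_def T_def epigraph_def
    by (auto intro: exI[of _ "f p - 1"]) 
  have dj: "S \<inter> T = {}" unfolding S_def T_def epigraph_def by auto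
  obtain a b where a0: "a \<noteq> 0" and aS: "\<forall>x\<in>S. inner a x \<le> b" and aT: "\<forall>x\<in>T. inner a x \<ge> b"
    using separating_hyperplane_sets[OF cS cT ne dj] by blast
  obtain a1 a2 where a12: "a = (a1, a2)" by (cases a)
  have S': "a1 \<bullet> x + a2 * s \<le> b" if "f x \<le> s" for x s
    using aS that a12 unfolding S_def epigraph_def by auto
  have T': "a1 \<bullet> p + a2 * s \<ge> b" if "s < f p" for s
    using aT that a12 unfolding T_def by auto
  have a2le: "a2 \<le> 0"
  proof (rule ccontr)
    assume "\<not> a2 \<le> 0"
    hence pos: "a2 > 0" by simp
    have "a1 \<bullet> p + a2 * ((\<bar>b\<bar> + \<bar>a1 \<bullet> p\<bar>) / a2 + \<bar>f p\<bar> + 1) \<le> b"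
    proof (rule S')
      have "0 \<le> (\<bar>b\<bar> + \<bar>a1 \<bullet> p\<bar>) / a2" using pos by simp
      thus "f p \<le> (\<bar>b\<bar> + \<bar>a1 \<bullet> p\<bar>) / a2 + \<bar>f p\<bar> + 1" by linarith
    qed
    moreover have "a2 * ((\<bar>b\<bar> + \<bar>a1 \<bullet> p\<bar>) / a2 + \<bar>f p\<bar> + 1) = \<bar>b\<bar> + \<bar>a1 \<bullet> p\<bar> + a2 * (\<bar>f p\<bar> + 1)"
      using pos by (simp add: field_simps)
    moreover have "a2 * (\<bar>f p\<bar> + 1) > 0" using pos by simp
    ultimately show False by linarith
  qed
  have a2ne: "a2 \<noteq> 0"
  proof
    assume z: "a2 = 0"
    have "a1 \<bullet> (p + a1) \<le> b" using S'[of "p + a1" "f (p + a1)"] z by simp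
    moreover have "a1 \<bullet> p \<ge> b" using T'[of "f p - 1"] z by simp
    ultimately have "a1 \<bullet> a1 \<le> 0" by (simp add: inner_add_right)
    hence "a1 = 0" by (metis inner_ge_zero inner_eq_zero_iff order_antisym)
    with z a12 a0 show False by (simp add: zero_prod_def)
  qed
  have neg: "a2 < 0" using a2le a2ne by simp
  define r where "r = (- 1 / a2) *\<^sub>R a1"
  have "r \<bullet> (x - p) \<le> f x - f p" for x
  proof -
    define s where "s = (f p + f x - r \<bullet> (x - p)) / 2"
    show ?thesis
    proof (rule ccontr)
      assume H: "\<not> ?thesis"
      hence sl: "s < f p" unfolding s_def by simp
      have 1: "a1 \<bullet> x + a2 * f x \<le> b" by (rule S') simp
      have 2: "a1 \<bullet> p + a2 * s \<ge> b" by (rule T'[OF sl])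
      have "a1 \<bullet> (x - p) \<le> a2 * (s - f x)" using 1 2 by (simp add: inner_diff_right algebra_simps)
      hence 3: "s - f x \<le> (a1 \<bullet> (x - p)) / a2" using neg by (simp add: le_divide_eq algebra_simps)
      have "r \<bullet> (x - p) = - ((a1 \<bullet> (x - p)) / a2)" by (simp add: r_def)
      hence "r \<bullet> (x - p) \<le> f x - s" using 3 by linarith
      thus False using H unfolding s_def by (simp add: field_simps)
    qed
  qed
  thus ?thesis by blast
qed

lemma mv_nth: "(M *v y) $ i = (\<Sum>j\<in>UNIV. M$i$j * y$j)"
  by (simp add: matrix_vector_mult_def)

lemma subdiff_iff:
  "M \<in> subdifferential g p \<longleftrightarrow> (\<forall>i x. (\<Sum>j\<in>UNIV. M$i$j * (x - p)$j) \<le> g x $ i - g p $ i)"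
  by (auto simp: subdifferential_def less_eq_vec_def mv_nth)

lemma final_class:
  fixes M :: "real^'n^'n"
  assumes nn: "\<And>i j. 0 \<le> M$i$j" and rs: "\<And>i. (\<Sum>j\<in>UNIV. M$i$j) = 1"
    and Sne: "i1 \<in> S" and cl: "\<And>i j. i \<in> S \<Longrightarrow> M$i$j \<noteq> 0 \<Longrightarrow> j \<in> S"
  shows "\<exists>F. recurrence_class M F \<and> F \<subseteq> S \<and> F \<noteq> {}"
proof -
  let ?G = "mat_graph M"
  define R where "R i = {j. (i, j) \<in> ?G\<^sup>*}" for i
  have RS: "R i \<subseteq> S" if "i \<in> S" for i
  proof
    fix j assume "j \<in> R i"
    hence "(i, j) \<in> ?G\<^sup>*" by (simp add: R_def)
    thus "j \<in> S"
      by (induction rule: rtrancl_induct) (use that cl in \<open>auto simp: mat_graph_def\<close>)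
  qed
  obtain i0 where i0: "i0 \<in> S" and mn: "\<And>i. i \<in> S \<Longrightarrow> card (R i0) \<le> card (R i)"
    using ex_has_least_nat[of "\<lambda>i. i \<in> S" i1 "\<lambda>i. card (R i)"] Sne by blast
  have bk: "(j, i0) \<in> ?G\<^sup>*" if "j \<in> R i0" for j
  proof -
    have "R j \<subseteq> R i0" using that by (auto simp: R_def)
    moreover have "card (R i0) \<le> card (R j)" using mn RS i0 that by blast
    ultimately have "R j = R i0" by (simp add: card_seteq)
    moreover have "i0 \<in> R i0" by (simp add: R_def)
    ultimately have "i0 \<in> R j" by simp
    thus ?thesis by (simp add: R_def)
  qed
  define F where "F = {j. (i0, j) \<in> ?G\<^sup>* \<and> (j, i0) \<in> ?G\<^sup>*}"
  have FR: "F = R i0" using bk by (auto simp: F_def R_def)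
  have clF: "\<forall>i\<in>F. \<forall>j. M $ i $ j \<noteq> 0 \<longrightarrow> j \<in> F"
  proof (intro ballI allI impI)
    fix i j assume "i \<in> F" "M $ i $ j \<noteq> 0"
    hence "(i0, j) \<in> ?G\<^sup>*" by (auto simp: F_def mat_graph_def intro: rtrancl_into_rtrancl)
    thus "j \<in> F" using FR by (simp add: R_def)
  qed
  have "recurrence_class M F"
    unfolding recurrence_class_def
  proof (intro conjI)
    show "\<exists>i. F = {j. (i, j) \<in> ?G\<^sup>* \<and> (j, i) \<in> ?G\<^sup>*}" unfolding F_def by blast
    show "\<forall>i\<in>F. \<forall>j. M $ i $ j \<noteq> 0 \<longrightarrow> j \<in> F" by (rule clF)
    show "\<forall>i\<in>F. \<forall>j\<in>F. 0 \<le> M $ i $ j" using nn by blast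
    show "\<forall>i\<in>F. (\<Sum>j\<in>F. M $ i $ j) = 1"
    proof
      fix i assume iF: "i \<in> F"
      have "(\<Sum>j\<in>F. M $ i $ j) = (\<Sum>j\<in>UNIV. M $ i $ j)"
        by (rule sum.mono_neutral_left) (use clF iF in auto)
      thus "(\<Sum>j\<in>F. M $ i $ j) = 1" using rs by simp
    qed
  qed
  moreover have "F \<subseteq> S" using FR RS i0 by blast
  moreover have "i0 \<in> F" by (simp add: F_def)
  ultimately show ?thesis by blast
qed

lemma max_principle:
  fixes M :: "real^'n^'n"
  assumes nn: "\<And>j. 0 \<le> M$i$j" and rs: "(\<Sum>j\<in>UNIV. M$i$j) = 1"
    and le: "\<And>j. M$i$j \<noteq> 0 \<Longrightarrow> d$j \<le> t" and ge: "t \<le> (\<Sum>j\<in>UNIV. M$i$j * d$j)"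
  shows "M$i$j \<noteq> 0 \<Longrightarrow> d$j = t"
proof -
  have nn2: "\<forall>j\<in>UNIV. 0 \<le> M$i$j * (t - d$j)"
    using nn le by (metis diff_ge_0_iff_ge mult_eq_0_iff mult_nonneg_nonneg order_refl)
  have "(\<Sum>j\<in>UNIV. M$i$j * (t - d$j)) = t * (\<Sum>j\<in>UNIV. M$i$j) - (\<Sum>j\<in>UNIV. M$i$j * d$j)"
    by (simp add: algebra_simps sum_subtractf sum_distrib_left)
  also have "\<dots> \<le> 0" using rs ge by simp
  finally have "(\<Sum>j\<in>UNIV. M$i$j * (t - d$j)) = 0"
    using sum_nonneg[of UNIV "\<lambda>j. M$i$j * (t - d$j)"] nn2 by auto
  hence "\<forall>j\<in>UNIV. M$i$j * (t - d$j) = 0"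
    using sum_nonneg_eq_0_iff[of UNIV "\<lambda>j. M$i$j * (t - d$j)"] nn2 by auto
  thus "M$i$j \<noteq> 0 \<Longrightarrow> d$j = t" by auto
qed

lemma min_principle:
  fixes M :: "real^'n^'n"
  assumes nn: "\<And>j. 0 \<le> M$i$j" and rs: "(\<Sum>j\<in>UNIV. M$i$j) = 1"
    and le: "\<And>j. M$i$j \<noteq> 0 \<Longrightarrow> t \<le> d$j" and ge: "(\<Sum>j\<in>UNIV. M$i$j * d$j) \<le> t"
  shows "M$i$j \<noteq> 0 \<Longrightarrow> d$j = t"
proof -
  have "M$i$j \<noteq> 0 \<Longrightarrow> (-d)$j = -t"
    by (rule max_principle[OF nn rs]) (use le ge in \<open>auto simp: sum_negf\<close>)
  thus "M$i$j \<noteq> 0 \<Longrightarrow> d$j = t" by simp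
qed

locale cmh =
  fixes g :: "real^'n \<Rightarrow> real^'n"
  assumes cvx: "convex_map g" and op: "order_preserving g" and ah: "additively_homogeneous g"
begin

lemma mono: "x \<le> y \<Longrightarrow> g x \<le> g y"
  using op unfolding order_preserving_def by blast

lemma hom: "g ((\<chi> i. c) + x) = (\<chi> i. c) + g x"
  using ah unfolding additively_homogeneous_def by blast

lemma monoi: "x \<le> y \<Longrightarrow> g x $ i \<le> g y $ i"
  using mono by (simp add: less_eq_vec_def)

lemma subdiff_ne: "\<exists>M. M \<in> subdifferential g p"
proof -
  have "\<forall>i. \<exists>r. \<forall>x. r \<bullet> (x - p) \<le> g x $ i - g p $ i"
    using subgrad_exists cvx unfolding convex_map_def by blast
  then obtain R where R: "\<And>i x. R i \<bullet> (x - p) \<le> g x $ i - g p $ i" by metis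
  have "(\<chi> i. R i) \<in> subdifferential g p"
    unfolding subdiff_iff using R by (simp add: inner_vec_def)
  thus ?thesis by blast
qed

lemma stoch:
  assumes "M \<in> subdifferential g p"
  shows "0 \<le> M$i$j" and "(\<Sum>k\<in>UNIV. M$i$k) = 1"
proof -
  have H: "\<And>x. (\<Sum>k\<in>UNIV. M$i$k * (x - p)$k) \<le> g x $ i - g p $ i"
    using assms unfolding subdiff_iff by blast
  define x where "x = (\<chi> k. if k = j then p$k - 1 else p$k)"
  have "x \<le> p" by (simp add: x_def less_eq_vec_def)
  hence "g x $ i \<le> g p $ i" by (rule monoi)
  moreover have "(\<Sum>k\<in>UNIV. M$i$k * (x - p)$k) = (\<Sum>k\<in>UNIV. if k = j then - M$i$j else 0)"
    by (rule sum.cong) (auto simp: x_def)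
  ultimately show "0 \<le> M$i$j" using H[of x] by simp
  have S: "(\<Sum>k\<in>UNIV. M$i$k) * c \<le> c" for c
  proof -
    have "(\<Sum>k\<in>UNIV. M$i$k * (((\<chi> k. c) + p) - p)$k) = (\<Sum>k\<in>UNIV. M$i$k) * c"
      by (simp add: sum_distrib_right)
    moreover have "g ((\<chi> k. c) + p) $ i - g p $ i = c" by (simp add: hom)
    ultimately show ?thesis using H[of "(\<chi> k. c) + p"] by simp
  qed
  show "(\<Sum>k\<in>UNIV. M$i$k) = 1" using S[of 1] S[of "-1"] by simp
qed

lemma crit_fix:
  assumes sup: "g u \<le> u" and iC: "i \<in> critical_nodes g"
  shows "g u $ i = u $ i"
proof -
  obtain w M F where w: "g w = w" and M: "M \<in> subdifferential g w" and rc: "recurrence_class M F"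
    and iF: "i \<in> F"
    using iC unfolding critical_nodes_def harmonic_def by blast
  let ?G = "mat_graph M"
  obtain i0 where F: "F = {j. (i0, j) \<in> ?G\<^sup>* \<and> (j, i0) \<in> ?G\<^sup>*}"
    using rc unfolding recurrence_class_def by blast
  have clF: "\<And>k j. k \<in> F \<Longrightarrow> M$k$j \<noteq> 0 \<Longrightarrow> j \<in> F"
    using rc unfolding recurrence_class_def by blast
  note nn = stoch(1)[OF M] and rs = stoch(2)[OF M]
  define d where "d = u - w"
  have key1: "(\<Sum>j\<in>UNIV. M$k$j * d$j) \<le> g u $ k - w $ k" for k
    using M w unfolding subdiff_iff d_def by metis
  have key2: "g u $ k - w $ k \<le> d $ k" for k
    using sup unfolding d_def less_eq_vec_def by simp
  define m where "m = Min ((\<lambda>j. d$j) ` F)"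
  have finF: "finite F" by simp
  have mle: "\<And>j. j \<in> F \<Longrightarrow> m \<le> d$j" unfolding m_def using finF by simp
  obtain j0 where j0: "j0 \<in> F" "d$j0 = m"
  proof -
    have "m \<in> (\<lambda>j. d$j) ` F" unfolding m_def using finF iF by (intro Min_in) auto
    thus ?thesis using that by auto
  qed
  have reach: "j \<in> F \<and> d$j = m" if "(j0, j) \<in> ?G\<^sup>*" for j
    using that
  proof (induction rule: rtrancl_induct)
    case base thus ?case using j0 by simp
  next
    case (step j k)
    hence jF: "j \<in> F" and dj: "d$j = m" and Mjk: "M$j$k \<noteq> 0" by (auto simp: mat_graph_def)
    have "d$k = m"
    proof (rule min_principle[of M j m d k])
      show "\<And>l. 0 \<le> M$j$l" by (rule nn)
      show "(\<Sum>l\<in>UNIV. M$j$l) = 1" by (rule rs)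
      show "\<And>l. M$j$l \<noteq> 0 \<Longrightarrow> m \<le> d$l" using clF jF mle by blast
      show "(\<Sum>l\<in>UNIV. M$j$l * d$l) \<le> m" using key1[of j] key2[of j] dj by linarith
      show "M$j$k \<noteq> 0" by (rule Mjk)
    qed
    thus ?case using clF jF Mjk by blast
  qed
  have ri: "(j0, i) \<in> ?G\<^sup>*"
    using j0(1) iF unfolding F by (auto intro: rtrancl_trans)
  have di: "d$i = m" using reach ri by blast
  have "(\<Sum>j\<in>UNIV. M$i$j * d$j) = (\<Sum>j\<in>UNIV. M$i$j * m)"
  proof (rule sum.cong)
    fix j :: 'n assume "j \<in> UNIV"
    show "M$i$j * d$j = M$i$j * m"
    proof (cases "M$i$j = 0")
      case False
      hence "(i, j) \<in> ?G" by (simp add: mat_graph_def)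
      hence "(j0, j) \<in> ?G\<^sup>*" using ri by (meson rtrancl_into_rtrancl)
      thus ?thesis using reach by simp
    qed simp
  qed simp
  also have "\<dots> = m" using rs[of i] by (simp add: sum_distrib_right[symmetric])
  finally have "m \<le> g u $ i - w $ i" using key1[of i] by simp
  thus ?thesis using key2[of i] di unfolding d_def by simp
qed

lemma rc_crit:
  assumes "g w = w" "M \<in> subdifferential g w" "recurrence_class M F" "k \<in> F"
  shows "k \<in> critical_nodes g"
  using assms unfolding critical_nodes_def harmonic_def by blast

lemma cmp_harm:
  assumes a: "g a = a" and bN: "\<And>i. i \<notin> critical_nodes g \<Longrightarrow> g b $ i \<le> b $ i"
    and aC: "\<And>i. i \<in> critical_nodes g \<Longrightarrow> a$i \<le> b$i"
  shows "a \<le> b"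
proof (rule ccontr)
  assume nle: "\<not> a \<le> b"
  define e where "e = b - a"
  define m where "m = Min (range (\<lambda>i. e$i))"
  have mle: "\<And>j. m \<le> e$j" unfolding m_def by simp
  obtain i1 where i1: "e$i1 = m"
  proof -
    have "m \<in> range (\<lambda>i. e$i)" unfolding m_def by (intro Min_in) auto
    thus ?thesis using that by auto
  qed
  have mneg: "m < 0"
  proof (rule ccontr)
    assume "\<not> m < 0"
    hence "\<forall>j. a$j \<le> b$j" using mle unfolding e_def by (metis diff_ge_0_iff_ge not_less order_trans vector_minus_component)
    thus False using nle by (simp add: less_eq_vec_def)
  qed
  define S where "S = {i. e$i = m}"
  have SC: "i \<notin> critical_nodes g" if "i \<in> S" for i
    using that aC[of i] mneg unfolding S_def e_def by force
  obtain P where P: "P \<in> subdifferential g a" using subdiff_ne by blast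
  have cl: "j \<in> S" if iS: "i \<in> S" and Pij: "P$i$j \<noteq> 0" for i j
  proof -
    have "e$j = m"
    proof (rule min_principle[of P i m e j])
      show "\<And>l. 0 \<le> P$i$l" by (rule stoch(1)[OF P])
      show "(\<Sum>l\<in>UNIV. P$i$l) = 1" by (rule stoch(2)[OF P])
      show "\<And>l. P$i$l \<noteq> 0 \<Longrightarrow> m \<le> e$l" by (rule mle)
      have "(\<Sum>l\<in>UNIV. P$i$l * e$l) \<le> g b $ i - g a $ i"
        using P unfolding subdiff_iff e_def by blast
      also have "\<dots> \<le> e$i" using bN[OF SC[OF iS]] a unfolding e_def by simp
      finally show "(\<Sum>l\<in>UNIV. P$i$l * e$l) \<le> m" using iS unfolding S_def by simp
      show "P$i$j \<noteq> 0" by (rule Pij)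
    qed
    thus ?thesis by (simp add: S_def)
  qed
  obtain F where F: "recurrence_class P F" "F \<subseteq> S" "F \<noteq> {}"
    using final_class[of P i1 S] stoch[OF P] cl i1 unfolding S_def by blast
  then obtain k where "k \<in> F" by blast
  hence "k \<in> critical_nodes g" "k \<in> S" using rc_crit[OF a P F(1)] F(2) by auto
  thus False using SC by blast
qed

lemma cmp_sub:
  assumes aN: "\<And>i. i \<notin> critical_nodes g \<Longrightarrow> a$i \<le> g a $ i" and b: "g b = b"
    and aC: "\<And>i. i \<in> critical_nodes g \<Longrightarrow> a$i \<le> b$i"
  shows "a \<le> b"
proof (rule ccontr)
  assume nle: "\<not> a \<le> b"
  define d where "d = a - b"
  define t where "t = Max (range (\<lambda>i. d$i))"
  have tge: "\<And>j. d$j \<le> t" unfolding t_def by simp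
  obtain i1 where i1: "d$i1 = t"
  proof -
    have "t \<in> range (\<lambda>i. d$i)" unfolding t_def by (intro Max_in) auto
    thus ?thesis using that by auto
  qed
  have tpos: "t > 0"
  proof (rule ccontr)
    assume "\<not> t > 0"
    hence "\<forall>j. a$j \<le> b$j" using tge unfolding d_def by (metis diff_le_0_iff_le not_less order_trans vector_minus_component)
    thus False using nle by (simp add: less_eq_vec_def)
  qed
  define S where "S = {i. d$i = t}"
  have SC: "i \<notin> critical_nodes g" if "i \<in> S" for i
    using that aC[of i] tpos unfolding S_def d_def by force
  obtain Q where Q: "Q \<in> subdifferential g a" using subdiff_ne by blast
  have clQ: "d$j = t" if iS: "i \<in> S" and Qij: "Q$i$j \<noteq> 0" for i j
  proof -
    have "(b - a)$j = -t"
    proof (rule min_principle[of Q i "-t" "b - a" j])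
      show "\<And>l. 0 \<le> Q$i$l" by (rule stoch(1)[OF Q])
      show "(\<Sum>l\<in>UNIV. Q$i$l) = 1" by (rule stoch(2)[OF Q])
      show "-t \<le> (b - a)$l" for l
      proof -
        have "d$l \<le> t" by (rule tge)
        thus ?thesis unfolding d_def by simp
      qed
      have "(\<Sum>l\<in>UNIV. Q$i$l * (b - a)$l) \<le> g b $ i - g a $ i"
        using Q unfolding subdiff_iff by blast
      also have "\<dots> \<le> (b - a)$i" using aN[OF SC[OF iS]] b by simp
      finally show "(\<Sum>l\<in>UNIV. Q$i$l * (b - a)$l) \<le> -t" using iS unfolding S_def d_def by simp
      show "Q$i$j \<noteq> 0" by (rule Qij)
    qed
    thus ?thesis unfolding d_def by simp
  qed
  define bt where "bt = (\<chi> k. t) + b"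
  have gbt: "g bt = bt" unfolding bt_def by (simp add: hom b)
  obtain P where P: "P \<in> subdifferential g bt" using subdiff_ne by blast
  define M where "M = (\<chi> i. if i \<in> S then Q$i else P$i)"
  have M: "M \<in> subdifferential g bt"
    unfolding subdiff_iff
  proof (intro allI)
    fix i x
    show "(\<Sum>j\<in>UNIV. M$i$j * (x - bt)$j) \<le> g x $ i - g bt $ i"
    proof (cases "i \<in> S")
      case False
      thus ?thesis using P unfolding subdiff_iff M_def by simp
    next
      case iS: True
      have "(\<Sum>j\<in>UNIV. M$i$j * (x - bt)$j) =
            (\<Sum>j\<in>UNIV. Q$i$j * (x - a)$j) + (\<Sum>j\<in>UNIV. Q$i$j * (d$j - t))"
      proof -
        have Mi: "M$i = Q$i" using iS by (simp add: M_def)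
        have "\<And>j. Q$i$j * (x - bt)$j = Q$i$j * (x - a)$j + Q$i$j * (d$j - t)"
          by (simp add: bt_def d_def right_diff_distrib distrib_left)
        thus ?thesis unfolding Mi by (simp add: sum.distrib)
      qed
      also have "(\<Sum>j\<in>UNIV. Q$i$j * (d$j - t)) \<le> 0"
        by (rule sum_nonpos) (simp add: mult_nonneg_nonpos stoch(1)[OF Q] tge)
      moreover have "(\<Sum>j\<in>UNIV. Q$i$j * (x - a)$j) \<le> g x $ i - g a $ i"
        using Q unfolding subdiff_iff by blast
      moreover have "g bt $ i \<le> g a $ i"
        using aN[OF SC[OF iS]] iS gbt unfolding S_def d_def bt_def by simp
      ultimately show ?thesis by linarith
    qed
  qed
  have clM: "j \<in> S" if "i \<in> S" "M$i$j \<noteq> 0" for i j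
  proof -
    have "M$i = Q$i" using that(1) by (simp add: M_def)
    hence "Q$i$j \<noteq> 0" using that(2) by simp
    thus ?thesis using clQ[OF that(1)] by (simp add: S_def)
  qed
  have "\<exists>F. recurrence_class M F \<and> F \<subseteq> S \<and> F \<noteq> {}"
  proof (rule final_class)
    show "\<And>i j. 0 \<le> M$i$j" by (rule stoch(1)[OF M])
    show "\<And>i. (\<Sum>j\<in>UNIV. M$i$j) = 1" by (rule stoch(2)[OF M])
    show "i1 \<in> S" using i1 by (simp add: S_def)
    show "\<And>i j. i \<in> S \<Longrightarrow> M$i$j \<noteq> 0 \<Longrightarrow> j \<in> S" by (rule clM)
  qed
  then obtain F where F: "recurrence_class M F" "F \<subseteq> S" "F \<noteq> {}" by blast
  then obtain k where "k \<in> F" by blast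
  hence "k \<in> critical_nodes g" "k \<in> S" using rc_crit[OF gbt M F(1)] F(2) by auto
  thus False using SC by blast
qed

lemma nonexp: "\<bar>g x $ i - g y $ i\<bar> \<le> norm (x - y)"
proof -
  have up: "g x $ i \<le> norm (x - y) + g y $ i" for x y
  proof -
    have "x \<le> (\<chi> k. norm (x - y)) + y"
      unfolding less_eq_vec_def
    proof
      fix k
      have "\<bar>(x - y) $ k\<bar> \<le> norm (x - y)" by (rule component_le_norm_cart)
      thus "x $ k \<le> ((\<chi> k. norm (x - y)) + y) $ k" by simp
    qed
    hence "g x $ i \<le> g ((\<chi> k. norm (x - y)) + y) $ i" by (rule monoi)
    thus ?thesis by (simp add: hom)
  qed
  show ?thesis using up[of x y] up[of y x] by (simp add: norm_minus_commute abs_le_iff)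
qed

lemma cont_seq:
  assumes "X \<longlonglongrightarrow> v"
  shows "(\<lambda>k. g (X k)) \<longlonglongrightarrow> g v"
proof (rule vec_tendstoI)
  fix i
  have n0: "(\<lambda>k. norm (X k - v)) \<longlonglongrightarrow> 0"
    using assms by (simp add: LIM_zero tendsto_norm_zero)
  have "(\<lambda>k. g (X k) $ i - g v $ i) \<longlonglongrightarrow> 0"
    by (rule Lim_null_comparison[OF _ n0]) (simp add: nonexp)
  thus "(\<lambda>k. g (X k) $ i) \<longlonglongrightarrow> g v $ i" by (rule LIM_zero_cancel)
qed

end
theorem theorem3p3:
  fixes g :: "real^'n \<Rightarrow> real^'n" and u :: "real^'n" and C N :: "'n set"
  assumes "convex_map g" and "order_preserving g" and "additively_homogeneous g"
    and "\<exists>w. harmonic g w"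
    and C_def: "C = critical_nodes g"
    and N_def: "N = UNIV - C"
    and "super_harmonic g u"
  shows "\<exists>v.
     ((\<lambda>k. (g ^^ k) u) \<longlonglongrightarrow> v) \<and>
     (\<forall>w. (harmonic g w \<and> (\<forall>i\<in>C. w $ i = u $ i)) \<longleftrightarrow> w = v) \<and>
     (\<forall>w. ((\<forall>i\<in>C. w $ i = u $ i) \<and>
           (\<forall>i\<in>N. g (\<chi> j. if j \<in> N then w $ j else u $ j) $ i = w $ i)) \<longleftrightarrow> w = v) \<and>
     (\<forall>w. (super_harmonic g w \<and> (\<forall>i\<in>C. u $ i \<le> w $ i) \<and>
           (\<forall>z. super_harmonic g z \<and> (\<forall>i\<in>C. u $ i \<le> z $ i) \<longrightarrow> w \<le> z)) \<longleftrightarrow> w = v)"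
proof -
  interpret cmh g by unfold_locales (use assms in auto)
  obtain w0 where w0: "g w0 = w0" using assms(4) unfolding harmonic_def by blast
  have sup: "g u \<le> u" using assms(7) unfolding super_harmonic_def .
  define x where "x k = (g ^^ k) u" for k
  have xS: "x (Suc k) = g (x k)" for k by (simp add: x_def)
  have supk: "g (x k) \<le> x k" for k
  proof (induction k)
    case 0 thus ?case using sup by (simp add: x_def)
  next
    case (Suc k) thus ?case unfolding xS by (rule mono)
  qed
  have critk: "x k $ i = u $ i" if "i \<in> C" for k i
  proof (induction k)
    case 0 thus ?case by (simp add: x_def)
  next
    case (Suc k) thus ?case unfolding xS using crit_fix[OF supk[of k]] that C_def by simp
  qed
  define c where "c = norm (w0 - u)"
  define lb where "lb = (\<chi> i. - c) + w0"
  have glb: "g lb = lb" unfolding lb_def by (simp add: hom w0)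
  have lbk: "lb \<le> x k" for k
  proof (induction k)
    case 0
    show ?case unfolding less_eq_vec_def
    proof
      fix i
      have "\<bar>(w0 - u) $ i\<bar> \<le> c" unfolding c_def by (rule component_le_norm_cart)
      thus "lb $ i \<le> x 0 $ i" by (simp add: lb_def x_def)
    qed
  next
    case (Suc k)
    hence "g lb \<le> g (x k)" by (rule mono)
    thus ?case using glb xS by simp
  qed
  have "\<forall>i. \<exists>L. (\<lambda>k. x k $ i) \<longlonglongrightarrow> L"
  proof
    fix i
    have "decseq (\<lambda>k. x k $ i)"
      by (rule decseq_SucI) (use supk xS in \<open>simp add: less_eq_vec_def\<close>)
    moreover have "\<forall>k. lb $ i \<le> x k $ i" using lbk by (simp add: less_eq_vec_def)
    ultimately obtain L where "(\<lambda>k. x k $ i) \<longlonglongrightarrow> L" by (rule decseq_convergent)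
    thus "\<exists>L. (\<lambda>k. x k $ i) \<longlonglongrightarrow> L" by blast
  qed
  then obtain L where L: "\<And>i. (\<lambda>k. x k $ i) \<longlonglongrightarrow> L i" by metis
  define v where "v = (\<chi> i. L i)"
  have xv: "x \<longlonglongrightarrow> v" by (rule vec_tendstoI) (simp add: v_def L)
  have "(\<lambda>k. x (Suc k)) \<longlonglongrightarrow> g v" unfolding xS by (rule cont_seq[OF xv])
  moreover have "(\<lambda>k. x (Suc k)) \<longlonglongrightarrow> v" using xv by (rule LIMSEQ_Suc)
  ultimately have gv: "g v = v" by (rule LIMSEQ_unique)
  have vC: "v $ i = u $ i" if "i \<in> C" for i
  proof -
    have "(\<lambda>k. x k $ i) \<longlonglongrightarrow> v $ i" using xv by (rule tendsto_vec_nth)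
    moreover have "(\<lambda>k. x k $ i) = (\<lambda>k. u $ i)" using critk[OF that] by simp
    ultimately have "(\<lambda>k. u $ i) \<longlonglongrightarrow> v $ i" by simp
    thus ?thesis by (simp add: LIMSEQ_const_iff)
  qed
  have CC: "\<And>i. i \<in> critical_nodes g \<longleftrightarrow> i \<in> C" using C_def by simp
  have P2: "(harmonic g w \<and> (\<forall>i\<in>C. w $ i = u $ i)) \<longleftrightarrow> w = v" for w
  proof
    assume H: "harmonic g w \<and> (\<forall>i\<in>C. w $ i = u $ i)"
    hence gw: "g w = w" by (simp add: harmonic_def)
    have "w \<le> v" by (rule cmp_harm[OF gw]) (use gv H vC CC in auto)
    moreover have "v \<le> w" by (rule cmp_harm[OF gv]) (use gw H vC CC in auto)
    ultimately show "w = v" by simp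
  qed (use gv vC in \<open>auto simp: harmonic_def\<close>)
  have P3: "((\<forall>i\<in>C. w $ i = u $ i) \<and>
           (\<forall>i\<in>N. g (\<chi> j. if j \<in> N then w $ j else u $ j) $ i = w $ i)) \<longleftrightarrow> w = v" for w
  proof
    assume H: "(\<forall>i\<in>C. w $ i = u $ i) \<and>
           (\<forall>i\<in>N. g (\<chi> j. if j \<in> N then w $ j else u $ j) $ i = w $ i)"
    have eq: "(\<chi> j. if j \<in> N then w $ j else u $ j) = w"
      using H unfolding N_def by (auto simp: vec_eq_iff)
    have gwN: "g w $ i = w $ i" if "i \<notin> C" for i
    proof -
      have "i \<in> N" using that N_def by simp
      hence "g (\<chi> j. if j \<in> N then w $ j else u $ j) $ i = w $ i" using H by blast
      thus ?thesis unfolding eq .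
    qed
    have "v \<le> w" by (rule cmp_harm[OF gv]) (use gwN H vC CC in auto)
    moreover have "w \<le> v" by (rule cmp_sub[OF _ gv]) (use gwN H vC CC in auto)
    ultimately show "w = v" by simp
  next
    assume wv: "w = v"
    have "(\<chi> j. if j \<in> N then v $ j else u $ j) = v"
      using vC unfolding N_def by (auto simp: vec_eq_iff)
    thus "(\<forall>i\<in>C. w $ i = u $ i) \<and>
           (\<forall>i\<in>N. g (\<chi> j. if j \<in> N then w $ j else u $ j) $ i = w $ i)"
      unfolding wv using vC gv by simp
  qed
  have vmin: "v \<le> z" if "super_harmonic g z" "\<forall>i\<in>C. u $ i \<le> z $ i" for z
    by (rule cmp_harm[OF gv]) (use that vC CC in \<open>auto simp: super_harmonic_def less_eq_vec_def\<close>)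
  have P4: "(super_harmonic g w \<and> (\<forall>i\<in>C. u $ i \<le> w $ i) \<and>
           (\<forall>z. super_harmonic g z \<and> (\<forall>i\<in>C. u $ i \<le> z $ i) \<longrightarrow> w \<le> z)) \<longleftrightarrow> w = v" for w
  proof
    assume H: "super_harmonic g w \<and> (\<forall>i\<in>C. u $ i \<le> w $ i) \<and>
           (\<forall>z. super_harmonic g z \<and> (\<forall>i\<in>C. u $ i \<le> z $ i) \<longrightarrow> w \<le> z)"
    have "w \<le> v" using H gv vC by (simp add: super_harmonic_def)
    moreover have "v \<le> w" using H vmin by blast
    ultimately show "w = v" by simp
  qed (use gv vC vmin in \<open>auto simp: super_harmonic_def\<close>)
  show ?thesis
  proof (rule exI[of _ v], intro conjI allI)
    show "(\<lambda>k. (g ^^ k) u) \<longlonglongrightarrow> v" using xv unfolding x_def .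
  qed (use P2 P3 P4 in blast)+
qed

end
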